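(* There is a universal constant $c>0$ such that the following holds. Let $n>3$, $\sigma>0$, $U>0$, $C_n>0$ with $\min\{U,C_n\}>2\pi\sigma$. Then $$\inf_{x_{1:n}} \sup_{\theta_{1:n}\in \mathrm{TV}(C_n),\ |\theta_1|\le U} \mathbb{E}\left[\sum_{t=1}^n \big(x_t(y_{1:t-1}) - \theta_t\big)^2 \right] \geq c\big(U^2 + C_n^2 + \sigma^2\log n + n^{1/3} C_n^{2/3}\sigma^{4/3}\big),$$ where the infimum is over all forecasters, i.e. all sequences of (measurable) functions $x_t$ of $y_1,\dots,y_{t-1}$, and $y_t=\theta_t+Z_t$ with $Z_1,\dots,Z_n$ i.i.d. $\mathcal N(0,\sigma^2)$.
   Context: $\mathrm{TV}(C_n)=\{\theta_{1:n}\in\mathbb{R}^n:\sum_{i=2}^n|\theta_i-\theta_{i-1}|\le C_n\}$. Logarithms are natural. In the online forecasting problem, $x_t$ may depend only on the past noisy observations $y_1,\dots,y_{t-1}$ ($x_1$ is a constant). *)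

theory Defs
  imports "HOL-Probability.Probability"
begin

text \<open>Sequences are indexed 1..n; values outside are irrelevant.\<close>

definition TV_class :: "nat \<Rightarrow> real \<Rightarrow> (nat \<Rightarrow> real) set" where
  "TV_class n C = {\<theta>. (\<Sum>i=2..n. \<bar>\<theta> i - \<theta> (i - 1)\<bar>) \<le> C}"

definition gauss_noise :: "nat \<Rightarrow> real \<Rightarrow> (nat \<Rightarrow> real) measure" where
  "gauss_noise n \<sigma> = PiM {1..n} (\<lambda>_. density lborel (normal_density 0 \<sigma>))"

definition forecaster :: "nat \<Rightarrow> (nat \<Rightarrow> (nat \<Rightarrow> real) \<Rightarrow> real) \<Rightarrow> bool" where
  "forecaster n x \<longleftrightarrow> (\<forall>t\<in>{1..n}. x t \<in> borel_measurable (PiM {1..<t} (\<lambda>_. borel)))"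

definition risk :: "nat \<Rightarrow> real \<Rightarrow> (nat \<Rightarrow> (nat \<Rightarrow> real) \<Rightarrow> real) \<Rightarrow> (nat \<Rightarrow> real) \<Rightarrow> ennreal" where
  "risk n \<sigma> x \<theta> = (\<integral>\<^sup>+ z. ennreal (\<Sum>t=1..n.
      (x t (restrict (\<lambda>i. \<theta> i + z i) {1..<t}) - \<theta> t)\<^sup>2) \<partial>gauss_noise n \<sigma>)"

end

theory Submission
  imports Defs
begin


lemma shift1:
  assumes s: "\<sigma> > 0"
  shows "distr (density lborel (normal_density 0 \<sigma>)) borel ((+) a) = density lborel (normal_density a \<sigma>)"
proof (rule measure_eqI)
  show "sets (distr (density lborel (normal_density 0 \<sigma>)) borel ((+) a)) = sets (density lborel (normal_density a \<sigma>))"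
    by simp
  fix A :: "real set" assume A: "A \<in> sets (distr (density lborel (normal_density 0 \<sigma>)) borel ((+) a))"
  then have A[measurable]: "A \<in> sets borel" by simp
  have "emeasure (distr (density lborel (normal_density 0 \<sigma>)) borel ((+) a)) A
     = (\<integral>\<^sup>+ y. ennreal (normal_density 0 \<sigma> y) * indicator A (a + y) \<partial>lborel)"
  proof -
    have m: "(+) a -` A \<in> sets borel"
      using measurable_sets[of "(+) a" borel borel A] A by simp
    show ?thesis
      apply (subst emeasure_distr, simp, simp)
      apply (subst emeasure_density, simp, simp add: m)
      apply (auto intro!: nn_integral_cong split: split_indicator)
      done
  qed
  also have "\<dots> = (\<integral>\<^sup>+ y. ennreal (normal_density a \<sigma> (a + y)) * indicator A (a + y) \<partial>lborel)"
    by (intro nn_integral_cong) (simp add: normal_density_def)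
  also have "\<dots> = (\<integral>\<^sup>+ w. ennreal (normal_density a \<sigma> w) * indicator A w \<partial>distr lborel borel ((+) a))"
    by (subst nn_integral_distr) auto
  also have "\<dots> = emeasure (density lborel (normal_density a \<sigma>)) A"
    by (simp add: lborel_distr_plus emeasure_density)
  finally show "emeasure (distr (density lborel (normal_density 0 \<sigma>)) borel ((+) a)) A = emeasure (density lborel (normal_density a \<sigma>)) A" .
qed

lemma shiftPi:
  assumes s: "\<sigma> > 0" and J: "finite J"
  shows "distr (PiM J (\<lambda>_. density lborel (normal_density 0 \<sigma>))) (PiM J (\<lambda>_. borel))
           (\<lambda>z. restrict (\<lambda>i. \<theta> i + z i) J)
       = PiM J (\<lambda>i. density lborel (normal_density (\<theta> i) \<sigma>))"
proof -
  interpret T: product_prob_space "\<lambda>i. density lborel (normal_density (\<theta> i) \<sigma>)"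
    using s by (intro product_prob_spaceI prob_space_normal_density)
  interpret Z: product_prob_space "\<lambda>_. density lborel (normal_density 0 \<sigma>)"
    using s by (intro product_prob_spaceI prob_space_normal_density)
  show ?thesis
  proof (rule T.PiM_eqI[OF J])
    show "sets (distr (PiM J (\<lambda>_. density lborel (normal_density 0 \<sigma>))) (PiM J (\<lambda>_. borel))
           (\<lambda>z. restrict (\<lambda>i. \<theta> i + z i) J)) = sets (PiM J (\<lambda>i. density lborel (normal_density (\<theta> i) \<sigma>)))"
      unfolding sets_distr by (intro sets_PiM_cong) auto
    fix A assume A: "\<And>i. i \<in> J \<Longrightarrow> A i \<in> sets (density lborel (normal_density (\<theta> i) \<sigma>))"
    have Ab: "A i \<in> sets borel" if "i \<in> J" for i using A[OF that] by simp
    have mp: "(+) (\<theta> i) -` A i \<in> sets borel" if "i \<in> J" for i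
      using measurable_sets[of "(+) (\<theta> i)" borel borel "A i"] Ab[OF that] by simp
    have pre: "(\<lambda>z. restrict (\<lambda>i. \<theta> i + z i) J) -` Pi\<^sub>E J A \<inter> space (PiM J (\<lambda>_. density lborel (normal_density 0 \<sigma>)))
        = Pi\<^sub>E J (\<lambda>i. (+) (\<theta> i) -` A i)"
      unfolding space_PiM by (auto simp: PiE_def Pi_def extensional_def)
    have meas: "(\<lambda>z. restrict (\<lambda>i. \<theta> i + z i) J) \<in> measurable (PiM J (\<lambda>_. density lborel (normal_density 0 \<sigma>))) (PiM J (\<lambda>_. borel))"
      by (intro measurable_restrict) auto
    have "emeasure (distr (PiM J (\<lambda>_. density lborel (normal_density 0 \<sigma>))) (PiM J (\<lambda>_. borel))
           (\<lambda>z. restrict (\<lambda>i. \<theta> i + z i) J)) (Pi\<^sub>E J A)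
       = emeasure (PiM J (\<lambda>_. density lborel (normal_density 0 \<sigma>))) (Pi\<^sub>E J (\<lambda>i. (+) (\<theta> i) -` A i))"
      apply (subst emeasure_distr[OF meas])
      subgoal using Ab by (intro sets_PiM_I_finite J) auto
      using pre by simp
    also have "\<dots> = (\<Prod>i\<in>J. emeasure (density lborel (normal_density 0 \<sigma>)) ((+) (\<theta> i) -` A i))"
      using mp by (subst Z.emeasure_PiM[OF J]) auto
    also have "\<dots> = (\<Prod>i\<in>J. emeasure (density lborel (normal_density (\<theta> i) \<sigma>)) (A i))"
    proof (rule prod.cong[OF refl])
      fix i assume i: "i \<in> J"
      have "emeasure (density lborel (normal_density 0 \<sigma>)) ((+) (\<theta> i) -` A i)
          = emeasure (distr (density lborel (normal_density 0 \<sigma>)) borel ((+) (\<theta> i))) (A i)"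
        using Ab[OF i] by (subst emeasure_distr) auto
      then show "emeasure (density lborel (normal_density 0 \<sigma>)) ((+) (\<theta> i) -` A i)
          = emeasure (density lborel (normal_density (\<theta> i) \<sigma>)) (A i)"
        by (simp add: shift1[OF s])
    qed
    finally show "emeasure (distr (PiM J (\<lambda>_. density lborel (normal_density 0 \<sigma>))) (PiM J (\<lambda>_. borel))
           (\<lambda>z. restrict (\<lambda>i. \<theta> i + z i) J)) (Pi\<^sub>E J A)
       = (\<Prod>i\<in>J. emeasure (density lborel (normal_density (\<theta> i) \<sigma>)) (A i))" .
  qed
qed

lemma indicator_PiE_prod:
  assumes "x \<in> extensional J" "finite J"
  shows "(indicator (Pi\<^sub>E J A) x :: ennreal) = (\<Prod>i\<in>J. indicator (A i) (x i))"
proof (cases "x \<in> Pi\<^sub>E J A")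
  case True then show ?thesis by (auto simp: indicator_def PiE_def Pi_def)
next
  case False
  then obtain i where "i \<in> J" "x i \<notin> A i" using assms(1) by (auto simp: PiE_def Pi_def)
  then show ?thesis using False assms(2) by (auto simp: indicator_def intro!: prod_zero)
qed

lemma PiM_density_normal:
  assumes s: "\<sigma> > 0" and J: "finite J"
  shows "PiM J (\<lambda>i. density lborel (normal_density (\<theta> i) \<sigma>))
       = density (PiM J (\<lambda>_. lborel)) (\<lambda>w. \<Prod>i\<in>J. ennreal (normal_density (\<theta> i) \<sigma> (w i)))"
proof -
  interpret T: product_prob_space "\<lambda>i. density lborel (normal_density (\<theta> i) \<sigma>)"
    using s by (intro product_prob_spaceI prob_space_normal_density)
  interpret L: product_sigma_finite "\<lambda>_. lborel"
    by unfold_locales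
  show ?thesis
  proof (rule T.PiM_eqI[OF J, symmetric])
    show "sets (density (PiM J (\<lambda>_. lborel)) (\<lambda>w. \<Prod>i\<in>J. ennreal (normal_density (\<theta> i) \<sigma> (w i))))
       = sets (PiM J (\<lambda>i. density lborel (normal_density (\<theta> i) \<sigma>)))"
      unfolding sets_density by (intro sets_PiM_cong) auto
    fix A assume A: "\<And>i. i \<in> J \<Longrightarrow> A i \<in> sets (density lborel (normal_density (\<theta> i) \<sigma>))"
    have Ab[measurable]: "A i \<in> sets borel" if "i \<in> J" for i using A[OF that] by simp
    have box: "Pi\<^sub>E J A \<in> sets (PiM J (\<lambda>_. lborel))"
      using Ab by (intro sets_PiM_I_finite J) auto
    have "emeasure (density (PiM J (\<lambda>_. lborel)) (\<lambda>w. \<Prod>i\<in>J. ennreal (normal_density (\<theta> i) \<sigma> (w i)))) (Pi\<^sub>E J A)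
      = (\<integral>\<^sup>+ w. (\<Prod>i\<in>J. ennreal (normal_density (\<theta> i) \<sigma> (w i))) * indicator (Pi\<^sub>E J A) w \<partial>PiM J (\<lambda>_. lborel))"
      using box by (subst emeasure_density) auto
    also have "\<dots> = (\<integral>\<^sup>+ w. (\<Prod>i\<in>J. ennreal (normal_density (\<theta> i) \<sigma> (w i)) * indicator (A i) (w i)) \<partial>PiM J (\<lambda>_. lborel))"
      by (intro nn_integral_cong) (simp add: indicator_PiE_prod[OF _ J] space_PiM PiE_iff prod.distrib)
    also have "\<dots> = (\<Prod>i\<in>J. (\<integral>\<^sup>+ y. ennreal (normal_density (\<theta> i) \<sigma> y) * indicator (A i) y \<partial>lborel))"
      using Ab by (subst L.product_nn_integral_prod[OF J]) auto
    also have "\<dots> = (\<Prod>i\<in>J. emeasure (density lborel (normal_density (\<theta> i) \<sigma>)) (A i))"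
      using Ab by (intro prod.cong refl) (simp add: emeasure_density)
    finally show "emeasure (density (PiM J (\<lambda>_. lborel)) (\<lambda>w. \<Prod>i\<in>J. ennreal (normal_density (\<theta> i) \<sigma> (w i)))) (Pi\<^sub>E J A)
      = (\<Prod>i\<in>J. emeasure (density lborel (normal_density (\<theta> i) \<sigma>)) (A i))" .
  qed
qed

definition gdens :: "real \<Rightarrow> nat set \<Rightarrow> (nat \<Rightarrow> real) \<Rightarrow> (nat \<Rightarrow> real) \<Rightarrow> ennreal" where
  "gdens \<sigma> J \<theta> w = (\<Prod>i\<in>J. ennreal (normal_density (\<theta> i) \<sigma> (w i)))"

lemma gdens_measurable[measurable]: "gdens \<sigma> J \<theta> \<in> borel_measurable (PiM J (\<lambda>_. lborel))"
  unfolding gdens_def by measurable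

lemma expect_shift:
  assumes s: "\<sigma> > 0" and J: "finite J" and f: "f \<in> borel_measurable (PiM J (\<lambda>_. borel))"
  shows "(\<integral>\<^sup>+ z. f (restrict (\<lambda>i. \<theta> i + z i) J) \<partial>PiM J (\<lambda>_. density lborel (normal_density 0 \<sigma>)))
       = (\<integral>\<^sup>+ w. gdens \<sigma> J \<theta> w * f w \<partial>PiM J (\<lambda>_. lborel))"
proof -
  have meas: "(\<lambda>z. restrict (\<lambda>i. \<theta> i + z i) J) \<in> measurable (PiM J (\<lambda>_. density lborel (normal_density 0 \<sigma>))) (PiM J (\<lambda>_. borel))"
    by (intro measurable_restrict) auto
  have f': "f \<in> borel_measurable (PiM J (\<lambda>_. lborel))"
    using f by (subst measurable_cong_sets[OF sets_PiM_cong refl]) (auto simp: sets_lborel)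
  have "(\<integral>\<^sup>+ z. f (restrict (\<lambda>i. \<theta> i + z i) J) \<partial>PiM J (\<lambda>_. density lborel (normal_density 0 \<sigma>)))
      = (\<integral>\<^sup>+ w. f w \<partial>distr (PiM J (\<lambda>_. density lborel (normal_density 0 \<sigma>))) (PiM J (\<lambda>_. borel)) (\<lambda>z. restrict (\<lambda>i. \<theta> i + z i) J))"
    using meas f by (subst nn_integral_distr) auto
  also have "\<dots> = (\<integral>\<^sup>+ w. f w \<partial>density (PiM J (\<lambda>_. lborel)) (gdens \<sigma> J \<theta>))"
    unfolding shiftPi[OF s J] PiM_density_normal[OF s J, of \<theta>] gdens_def[abs_def] ..
  also have "\<dots> = (\<integral>\<^sup>+ w. gdens \<sigma> J \<theta> w * f w \<partial>PiM J (\<lambda>_. lborel))"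
    using f' by (subst nn_integral_density) auto
  finally show ?thesis .
qed

definition Rt :: "real \<Rightarrow> (nat \<Rightarrow> (nat \<Rightarrow> real) \<Rightarrow> real) \<Rightarrow> (nat \<Rightarrow> real) \<Rightarrow> nat \<Rightarrow> ennreal" where
  "Rt \<sigma> x \<theta> t = (\<integral>\<^sup>+ w. gdens \<sigma> {1..<t} \<theta> w * ennreal ((x t w - \<theta> t)\<^sup>2) \<partial>PiM {1..<t} (\<lambda>_. lborel))"

lemma risk_eq:
  assumes s: "\<sigma> > 0" and fc: "forecaster n x"
  shows "risk n \<sigma> x \<theta> = (\<Sum>t=1..n. Rt \<sigma> x \<theta> t)"
proof -
  let ?N = "density lborel (normal_density 0 \<sigma>)"
  interpret Z: product_prob_space "\<lambda>_. ?N"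
    using s by (intro product_prob_spaceI prob_space_normal_density)
  have xm: "x t \<in> borel_measurable (PiM {1..<t} (\<lambda>_. borel))" if "t \<in> {1..n}" for t
    using fc that unfolding forecaster_def by auto
  have trm: "(\<integral>\<^sup>+ z. ennreal ((x t (restrict (\<lambda>i. \<theta> i + z i) {1..<t}) - \<theta> t)\<^sup>2) \<partial>gauss_noise n \<sigma>) = Rt \<sigma> x \<theta> t"
    if t: "t \<in> {1..n}" for t
  proof -
    define F where "F = (\<lambda>w. ennreal ((x t w - \<theta> t)\<^sup>2))"
    have Fm: "F \<in> borel_measurable (PiM {1..<t} (\<lambda>_. borel))"
      unfolding F_def using xm[OF t] by measurable
    have sub: "{1..<t} \<subseteq> {1..n}" using t by auto
    have shm: "(\<lambda>z. restrict (\<lambda>i. \<theta> i + z i) {1..<t}) \<in> measurable (PiM {1..<t} (\<lambda>_. ?N)) (PiM {1..<t} (\<lambda>_. borel))"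
      by (intro measurable_restrict) auto
    have "(\<integral>\<^sup>+ z. F (restrict (\<lambda>i. \<theta> i + z i) {1..<t}) \<partial>PiM {1..n} (\<lambda>_. ?N))
        = (\<integral>\<^sup>+ z. F (restrict (\<lambda>i. \<theta> i + restrict z {1..<t} i) {1..<t}) \<partial>PiM {1..n} (\<lambda>_. ?N))"
      by (intro nn_integral_cong) (simp add: restrict_def cong: if_cong)
    also have "\<dots> = (\<integral>\<^sup>+ z. F (restrict (\<lambda>i. \<theta> i + z i) {1..<t}) \<partial>distr (PiM {1..n} (\<lambda>_. ?N)) (PiM {1..<t} (\<lambda>_. ?N)) (\<lambda>z. restrict z {1..<t}))"
      using Fm shm sub by (subst nn_integral_distr) (auto intro!: measurable_restrict_subset)
    also have "\<dots> = (\<integral>\<^sup>+ z. F (restrict (\<lambda>i. \<theta> i + z i) {1..<t}) \<partial>PiM {1..<t} (\<lambda>_. ?N))"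
      using Z.distr_restrict[OF sub] by simp
    also have "\<dots> = Rt \<sigma> x \<theta> t"
      unfolding Rt_def using expect_shift[OF s _ Fm] by (simp add: F_def)
    finally show ?thesis unfolding F_def gauss_noise_def .
  qed
  have "risk n \<sigma> x \<theta> = (\<integral>\<^sup>+ z. (\<Sum>t=1..n. ennreal ((x t (restrict (\<lambda>i. \<theta> i + z i) {1..<t}) - \<theta> t)\<^sup>2)) \<partial>gauss_noise n \<sigma>)"
    unfolding risk_def by (intro nn_integral_cong) simp
  also have "\<dots> = (\<Sum>t=1..n. (\<integral>\<^sup>+ z. ennreal ((x t (restrict (\<lambda>i. \<theta> i + z i) {1..<t}) - \<theta> t)\<^sup>2) \<partial>gauss_noise n \<sigma>))"
  proof (rule nn_integral_sum)
    fix t assume t: "t \<in> {1..n}"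
    have shm: "(\<lambda>z. restrict (\<lambda>i. \<theta> i + z i) {1..<t}) \<in> measurable (PiM {1..n} (\<lambda>_. ?N)) (PiM {1..<t} (\<lambda>_. borel))"
      using t by (intro measurable_restrict) auto
    show "(\<lambda>z. ennreal ((x t (restrict (\<lambda>i. \<theta> i + z i) {1..<t}) - \<theta> t)\<^sup>2)) \<in> borel_measurable (gauss_noise n \<sigma>)"
      unfolding gauss_noise_def using measurable_comp[OF shm xm[OF t]] by (simp add: comp_def)
  qed
  also have "\<dots> = (\<Sum>t=1..n. Rt \<sigma> x \<theta> t)"
    by (intro sum.cong refl trm) 
  finally show ?thesis .
qed



lemma normal_prod_int:
  assumes s: "\<sigma> > 0" and J: "finite J" and c: "\<And>i. c i \<ge> 0"
  shows "(\<integral>\<^sup>+ w. ennreal (\<Prod>i\<in>J. c i * normal_density (m i) \<sigma> (w i)) \<partial>PiM J (\<lambda>_. lborel)) = ennreal (\<Prod>i\<in>J. c i)"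
proof -
  interpret L: product_sigma_finite "\<lambda>_. lborel" by unfold_locales
  have one: "(\<integral>\<^sup>+ y. ennreal (c i * normal_density (m i) \<sigma> y) \<partial>lborel) = ennreal (c i)" for i
  proof -
    have "(\<integral>\<^sup>+ y. ennreal (c i * normal_density (m i) \<sigma> y) \<partial>lborel) = ennreal (c i) * (\<integral>\<^sup>+ y. ennreal (normal_density (m i) \<sigma> y) \<partial>lborel)"
      using c by (subst nn_integral_cmult[symmetric]) (auto simp: ennreal_mult)
    also have "(\<integral>\<^sup>+ y. ennreal (normal_density (m i) \<sigma> y) \<partial>lborel) = 1"
      using s by (subst nn_integral_eq_integral) auto
    finally show ?thesis by simp
  qed
  have "(\<integral>\<^sup>+ w. ennreal (\<Prod>i\<in>J. c i * normal_density (m i) \<sigma> (w i)) \<partial>PiM J (\<lambda>_. lborel))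
      = (\<integral>\<^sup>+ w. (\<Prod>i\<in>J. ennreal (c i * normal_density (m i) \<sigma> (w i))) \<partial>PiM J (\<lambda>_. lborel))"
    using c by (intro nn_integral_cong) (simp add: prod_ennreal)
  also have "\<dots> = (\<Prod>i\<in>J. (\<integral>\<^sup>+ y. ennreal (c i * normal_density (m i) \<sigma> y) \<partial>lborel))"
    by (subst L.product_nn_integral_prod[OF J]) auto
  also have "\<dots> = ennreal (\<Prod>i\<in>J. c i)"
    using c by (simp add: one prod_ennreal)
  finally show ?thesis .
qed

lemma gauss_sqrt_identity:
  assumes s: "\<sigma> > 0"
  shows "(exp (-(a-b)\<^sup>2/(8*\<sigma>\<^sup>2)) * normal_density ((a+b)/2) \<sigma> y)\<^sup>2 = normal_density a \<sigma> y * normal_density b \<sigma> y"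
proof -
  have e: "(exp (-(a-b)\<^sup>2/(8*\<sigma>\<^sup>2)) * exp (-(y - (a+b)/2)\<^sup>2/(2*\<sigma>\<^sup>2)))\<^sup>2
        = exp (-(y-a)\<^sup>2/(2*\<sigma>\<^sup>2)) * exp (-(y-b)\<^sup>2/(2*\<sigma>\<^sup>2))"
  proof -
    have "(exp (-(a-b)\<^sup>2/(8*\<sigma>\<^sup>2)) * exp (-(y - (a+b)/2)\<^sup>2/(2*\<sigma>\<^sup>2)))\<^sup>2
       = exp (2 * (-(a-b)\<^sup>2/(8*\<sigma>\<^sup>2) + -(y - (a+b)/2)\<^sup>2/(2*\<sigma>\<^sup>2)))"
      by (simp add: power2_eq_square exp_add[symmetric])
    also have "2 * (-(a-b)\<^sup>2/(8*\<sigma>\<^sup>2) + -(y - (a+b)/2)\<^sup>2/(2*\<sigma>\<^sup>2)) = -(y-a)\<^sup>2/(2*\<sigma>\<^sup>2) + -(y-b)\<^sup>2/(2*\<sigma>\<^sup>2)"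
      using s by (simp add: field_simps power2_eq_square)
    finally show ?thesis by (simp add: exp_add[symmetric])
  qed
  have sq: "(1 / sqrt (2 * pi * \<sigma>\<^sup>2))\<^sup>2 = 1 / sqrt (2 * pi * \<sigma>\<^sup>2) * (1 / sqrt (2 * pi * \<sigma>\<^sup>2))"
    by (simp add: power2_eq_square)
  show ?thesis
    unfolding normal_density_def
    using e by (simp add: power_mult_distrib power2_eq_square mult_ac)
qed

lemma am_gm_min:
  fixes p q S l :: real
  assumes "0 \<le> p" "0 \<le> q" "0 \<le> S" "S\<^sup>2 = p * q" "l > 0"
  shows "S \<le> l/2 * min p q + (p + q)/(2*l)"
proof -
  define m where "m = min p q"
  define M where "M = max p q"
  have mM: "S\<^sup>2 = m * M" "0 \<le> m" "0 \<le> M" "M \<le> p + q"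
    using assms unfolding m_def M_def by (auto simp: min_def max_def mult.commute)
  have id: "(l*m + M/l)\<^sup>2 = (l*m - M/l)\<^sup>2 + 4*(m*M)"
    using \<open>l > 0\<close> by (simp add: power2_eq_square field_simps)
  have "(2*S)\<^sup>2 = 4*(m*M)" using mM by (simp add: power_mult_distrib)
  then have "(l*m + M/l)\<^sup>2 \<ge> (2*S)\<^sup>2"
    unfolding id by simp
  then have "2*S \<le> l*m + M/l"
    by (rule power2_le_imp_le) (use mM \<open>l>0\<close> in simp)
  moreover have "M/l \<le> (p+q)/l" using mM \<open>l>0\<close> by (simp add: divide_right_mono)
  ultimately show ?thesis unfolding m_def using \<open>l>0\<close> by (simp add: field_simps)
qed

definition Pr :: "real \<Rightarrow> nat set \<Rightarrow> (nat \<Rightarrow> real) \<Rightarrow> (nat \<Rightarrow> real) \<Rightarrow> real" where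
  "Pr \<sigma> J \<theta> w = (\<Prod>i\<in>J. normal_density (\<theta> i) \<sigma> (w i))"

lemma Pr_nonneg: "0 \<le> Pr \<sigma> J \<theta> w"
  unfolding Pr_def by (intro prod_nonneg) auto

lemma gdens_Pr: "gdens \<sigma> J \<theta> w = ennreal (Pr \<sigma> J \<theta> w)"
  unfolding gdens_def Pr_def by (simp add: prod_ennreal)

lemma Pr_measurable[measurable]: "Pr \<sigma> J \<theta> \<in> borel_measurable (PiM J (\<lambda>_. lborel))"
  unfolding Pr_def by measurable

lemma Pr_int:
  assumes s: "\<sigma> > 0" and J: "finite J"
  shows "(\<integral>\<^sup>+ w. ennreal (Pr \<sigma> J \<theta> w) \<partial>PiM J (\<lambda>_. lborel)) = 1"
  using normal_prod_int[OF s J, of "\<lambda>_. 1" \<theta>] unfolding Pr_def by simp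

lemma min_int_bound:
  fixes \<theta> \<theta>' :: "nat \<Rightarrow> real" and \<sigma> :: real and J :: "nat set"
  assumes s: "\<sigma> > 0" and J: "finite J"
  defines "A \<equiv> (\<Prod>i\<in>J. exp (-(\<theta> i - \<theta>' i)\<^sup>2/(8*\<sigma>\<^sup>2)))"
  shows "ennreal (3 * A\<^sup>2 / 8) \<le> (\<integral>\<^sup>+ w. ennreal (min (Pr \<sigma> J \<theta> w) (Pr \<sigma> J \<theta>' w)) \<partial>PiM J (\<lambda>_. lborel))"
proof -
  let ?Q = "PiM J (\<lambda>_. lborel)"
  define e where "e i = exp (-(\<theta> i - \<theta>' i)\<^sup>2/(8*\<sigma>\<^sup>2))" for i
  define S where "S w = (\<Prod>i\<in>J. e i * normal_density ((\<theta> i + \<theta>' i)/2) \<sigma> (w i))" for w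
  define m where "m = (\<integral>\<^sup>+ w. ennreal (min (Pr \<sigma> J \<theta> w) (Pr \<sigma> J \<theta>' w)) \<partial>?Q)"
  have Apos: "A > 0" unfolding A_def by (intro prod_pos) auto
  have S_int: "(\<integral>\<^sup>+ w. ennreal (S w) \<partial>?Q) = ennreal A"
    unfolding S_def A_def e_def by (rule normal_prod_int[OF s J]) simp
  have S_nn: "0 \<le> S w" for w unfolding S_def e_def by (intro prod_nonneg) auto
  have S_sq: "(S w)\<^sup>2 = Pr \<sigma> J \<theta> w * Pr \<sigma> J \<theta>' w" for w
  proof -
    have "(S w)\<^sup>2 = (\<Prod>i\<in>J. (e i * normal_density ((\<theta> i + \<theta>' i)/2) \<sigma> (w i))\<^sup>2)"
      unfolding S_def by (simp add: prod_power_distrib)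
    also have "\<dots> = (\<Prod>i\<in>J. normal_density (\<theta> i) \<sigma> (w i) * normal_density (\<theta>' i) \<sigma> (w i))"
      unfolding e_def by (intro prod.cong refl gauss_sqrt_identity s)
    finally show ?thesis unfolding Pr_def by (simp add: prod.distrib)
  qed
  define l where "l = 4 / A"
  have lpos: "l > 0" using Apos unfolding l_def by simp
  have "ennreal A = (\<integral>\<^sup>+ w. ennreal (S w) \<partial>?Q)" using S_int by simp
  also have "\<dots> \<le> (\<integral>\<^sup>+ w. ennreal (l/2) * ennreal (min (Pr \<sigma> J \<theta> w) (Pr \<sigma> J \<theta>' w))
        + ennreal (1/(2*l)) * (ennreal (Pr \<sigma> J \<theta> w) + ennreal (Pr \<sigma> J \<theta>' w)) \<partial>?Q)"
  proof (intro nn_integral_mono)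
    fix w
    have "S w \<le> l/2 * min (Pr \<sigma> J \<theta> w) (Pr \<sigma> J \<theta>' w) + (Pr \<sigma> J \<theta> w + Pr \<sigma> J \<theta>' w)/(2*l)"
      by (rule am_gm_min[OF Pr_nonneg Pr_nonneg S_nn S_sq lpos])
    then have "ennreal (S w) \<le> ennreal (l/2 * min (Pr \<sigma> J \<theta> w) (Pr \<sigma> J \<theta>' w) + (Pr \<sigma> J \<theta> w + Pr \<sigma> J \<theta>' w)/(2*l))"
      by (rule ennreal_leI)
    also have "\<dots> = ennreal (l/2) * ennreal (min (Pr \<sigma> J \<theta> w) (Pr \<sigma> J \<theta>' w))
        + ennreal (1/(2*l)) * (ennreal (Pr \<sigma> J \<theta> w) + ennreal (Pr \<sigma> J \<theta>' w))"
      using lpos Pr_nonneg[of \<sigma> J \<theta> w] Pr_nonneg[of \<sigma> J \<theta>' w]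
      by (simp add: ennreal_mult[symmetric] ennreal_plus[symmetric] del: ennreal_plus) 
    finally show "ennreal (S w) \<le> \<dots>" .
  qed
  also have "\<dots> = ennreal (l/2) * m + ennreal (1/(2*l)) * 2"
    unfolding m_def
    by (simp add: nn_integral_add nn_integral_cmult Pr_int[OF s J] one_add_one)
  finally have ineq: "ennreal A \<le> ennreal (l/2) * m + ennreal (1/(2*l)) * 2" .
  have "m \<le> (\<integral>\<^sup>+ w. ennreal (Pr \<sigma> J \<theta> w) \<partial>?Q)"
    unfolding m_def by (intro nn_integral_mono ennreal_leI) simp
  then have "m \<le> 1" using Pr_int[OF s J] by simp
  then obtain mr where mr: "m = ennreal mr" "0 \<le> mr"
    by (metis ennreal_cases ennreal_le_1 ennreal_one_neq_top neq_top_trans)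
  have e1: "ennreal (1/(2*l)) * 2 = ennreal (1/l)"
  proof -
    have "ennreal (1/(2*l)) * 2 = ennreal (1/(2*l)) * ennreal 2" by simp
    also have "\<dots> = ennreal (1/(2*l) * 2)" by (rule ennreal_mult''[symmetric]) simp
    also have "1/(2*l) * 2 = 1/l" by simp
    finally show ?thesis .
  qed
  have e2: "ennreal (l/2) * ennreal mr = ennreal (l/2 * mr)"
    using lpos mr(2) by (subst ennreal_mult[symmetric]) auto
  have "ennreal A \<le> ennreal (l/2 * mr) + ennreal (1/l)"
    using ineq unfolding mr(1) e1 e2 .
  also have "\<dots> = ennreal (l/2 * mr + 1/l)"
    using lpos mr by (subst ennreal_plus) auto
  finally have "ennreal A \<le> ennreal (l/2 * mr + 1/l)" .
  then have "A \<le> l/2 * mr + 1/l" using lpos mr by (subst (asm) ennreal_le_iff) auto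
  then have "A \<le> 2/A * mr + A/4" unfolding l_def by simp
  then have "3 * A\<^sup>2 / 8 \<le> mr" using Apos by (simp add: field_simps power2_eq_square)
  then show ?thesis unfolding m_def[symmetric] mr by (intro ennreal_leI)
qed

lemma pointwise_pair:
  fixes P P' v a b :: real
  assumes "0 \<le> P" "0 \<le> P'"
  shows "min P P' * ((a - b)\<^sup>2 / 2) \<le> P * (v - a)\<^sup>2 + P' * (v - b)\<^sup>2"
proof -
  have h: "(a - b)\<^sup>2 / 2 \<le> (v - a)\<^sup>2 + (v - b)\<^sup>2"
  proof -
    have e: "(v - a)\<^sup>2 + (v - b)\<^sup>2 = (a - b)\<^sup>2 / 2 + (2 * v - a - b)\<^sup>2 / 2"
      by (simp add: power2_eq_square field_simps)
    show ?thesis unfolding e by simp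
  qed
  have "min P P' * ((a - b)\<^sup>2 / 2) \<le> min P P' * ((v - a)\<^sup>2 + (v - b)\<^sup>2)"
    using h assms by (intro mult_left_mono) auto
  also have "\<dots> \<le> P * (v - a)\<^sup>2 + P' * (v - b)\<^sup>2"
    by (simp add: distrib_left add_mono mult_right_mono)
  finally show ?thesis .
qed

lemma pair_bound:
  fixes \<theta> \<theta>' :: "nat \<Rightarrow> real" and \<sigma> :: real
  assumes s: "\<sigma> > 0" and xm: "x t \<in> borel_measurable (PiM {1..<t} (\<lambda>_. borel))"
  shows "ennreal ((\<theta> t - \<theta>' t)\<^sup>2 * 3 / 16 * (\<Prod>i\<in>{1..<t}. exp (-(\<theta> i - \<theta>' i)\<^sup>2/(8*\<sigma>\<^sup>2)))\<^sup>2)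
       \<le> Rt \<sigma> x \<theta> t + Rt \<sigma> x \<theta>' t"
proof -
  define J where "J = {1..<t}"
  let ?Q = "PiM J (\<lambda>_. lborel)"
  define A where "A = (\<Prod>i\<in>J. exp (-(\<theta> i - \<theta>' i)\<^sup>2/(8*\<sigma>\<^sup>2)))"
  have xm': "x t \<in> borel_measurable ?Q"
    using xm unfolding J_def by (subst measurable_cong_sets[OF sets_PiM_cong refl]) (auto simp: sets_lborel)
  have "ennreal ((\<theta> t - \<theta>' t)\<^sup>2 / 2) * ennreal (3 * A\<^sup>2 / 8)
     \<le> ennreal ((\<theta> t - \<theta>' t)\<^sup>2 / 2) * (\<integral>\<^sup>+ w. ennreal (min (Pr \<sigma> J \<theta> w) (Pr \<sigma> J \<theta>' w)) \<partial>?Q)"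
    unfolding A_def J_def by (intro mult_left_mono min_int_bound s) auto
  also have "\<dots> = (\<integral>\<^sup>+ w. ennreal (min (Pr \<sigma> J \<theta> w) (Pr \<sigma> J \<theta>' w) * ((\<theta> t - \<theta>' t)\<^sup>2 / 2)) \<partial>?Q)"
    apply (subst nn_integral_cmult[symmetric], simp)
    apply (intro nn_integral_cong)
    apply (subst ennreal_mult[symmetric])
      apply (auto simp: Pr_nonneg mult.commute)
    done
  also have "\<dots> \<le> (\<integral>\<^sup>+ w. ennreal (Pr \<sigma> J \<theta> w * (x t w - \<theta> t)\<^sup>2 + Pr \<sigma> J \<theta>' w * (x t w - \<theta>' t)\<^sup>2) \<partial>?Q)"
    by (intro nn_integral_mono ennreal_leI pointwise_pair Pr_nonneg)
  also have "\<dots> = (\<integral>\<^sup>+ w. gdens \<sigma> J \<theta> w * ennreal ((x t w - \<theta> t)\<^sup>2) + gdens \<sigma> J \<theta>' w * ennreal ((x t w - \<theta>' t)\<^sup>2) \<partial>?Q)"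
    by (intro nn_integral_cong) (simp add: gdens_Pr Pr_nonneg ennreal_mult)
  also have "\<dots> = Rt \<sigma> x \<theta> t + Rt \<sigma> x \<theta>' t"
    unfolding Rt_def J_def[symmetric] using xm' by (subst nn_integral_add) auto
  finally have "ennreal ((\<theta> t - \<theta>' t)\<^sup>2 / 2) * ennreal (3 * A\<^sup>2 / 8) \<le> Rt \<sigma> x \<theta> t + Rt \<sigma> x \<theta>' t" .
  moreover have "ennreal ((\<theta> t - \<theta>' t)\<^sup>2 / 2) * ennreal (3 * A\<^sup>2 / 8) = ennreal ((\<theta> t - \<theta>' t)\<^sup>2 * 3 / 16 * A\<^sup>2)"
    by (subst ennreal_mult[symmetric]) auto
  ultimately show ?thesis unfolding A_def J_def by simp
qed



lemma avg_sup:
  fixes f :: "'b \<Rightarrow> ennreal" and g :: "'a \<Rightarrow> 'b"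
  assumes E: "finite E" "E \<noteq> {}" and gS: "\<And>e. e \<in> E \<Longrightarrow> g e \<in> S"
    and le: "of_nat (card E) * ennreal B \<le> (\<Sum>e\<in>E. f (g e))"
  shows "ennreal B \<le> (SUP \<theta>\<in>S. f \<theta>)"
proof -
  have "(\<Sum>e\<in>E. f (g e)) \<le> of_nat (card E) * (SUP \<theta>\<in>S. f \<theta>)"
    by (rule sum_bounded_above) (auto intro: SUP_upper gS)
  with le have "of_nat (card E) * ennreal B \<le> of_nat (card E) * (SUP \<theta>\<in>S. f \<theta>)" by (rule order_trans)
  moreover have "(of_nat (card E) :: ennreal) \<noteq> 0" using E by simp
  moreover have "(of_nat (card E) :: ennreal) \<noteq> top" by simp
  ultimately show ?thesis by (simp add: ennreal_mult_le_mult_iff)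
qed

lemma flip_sum:
  fixes F :: "'a \<Rightarrow> ennreal"
  assumes E: "finite E" and h: "\<And>e. e \<in> E \<Longrightarrow> h e \<in> E" "\<And>e. e \<in> E \<Longrightarrow> h (h e) = e"
    and c: "\<And>e. e \<in> E \<Longrightarrow> ennreal c \<le> F e + F (h e)" and c0: "c \<ge> 0"
  shows "of_nat (card E) * ennreal (c/2) \<le> (\<Sum>e\<in>E. F e)"
proof -
  have re: "(\<Sum>e\<in>E. F (h e)) = (\<Sum>e\<in>E. F e)"
    by (rule sum.reindex_bij_witness[where i=h and j=h]) (auto simp: h)
  have "2 * (of_nat (card E) * ennreal (c/2)) = of_nat (card E) * ennreal c"
  proof -
    have "2 * ennreal (c/2) = ennreal c"
      using c0 by (simp add: ennreal_mult[symmetric] ennreal_numeral[symmetric] del: ennreal_numeral)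
    then show ?thesis by (simp add: mult_ac)
  qed
  also have "\<dots> = (\<Sum>e\<in>E. ennreal c)" by simp
  also have "\<dots> \<le> (\<Sum>e\<in>E. F e + F (h e))" by (intro sum_mono c)
  also have "\<dots> = 2 * (\<Sum>e\<in>E. F e)" by (simp add: sum.distrib re mult_2)
  finally show ?thesis by (simp add: ennreal_mult_le_mult_iff)
qed



definition blk :: "nat \<Rightarrow> nat \<Rightarrow> nat" where "blk L i = (i - 1) div L"
definition th :: "real \<Rightarrow> nat \<Rightarrow> (nat \<Rightarrow> bool) \<Rightarrow> nat \<Rightarrow> real" where
  "th d L \<epsilon> i = (if \<epsilon> (blk L i) then d else - d)"
definition flipb :: "nat \<Rightarrow> (nat \<Rightarrow> bool) \<Rightarrow> nat \<Rightarrow> bool" where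
  "flipb b \<epsilon> = \<epsilon>(b := \<not> \<epsilon> b)"

lemma th_TV:
  assumes L: "L \<ge> 1" and d: "d \<ge> 0"
  shows "(\<Sum>i=2..n. \<bar>th d L \<epsilon> i - th d L \<epsilon> (i - 1)\<bar>) \<le> 2 * d * real ((n - 1) div L)"
proof -
  have step: "\<bar>th d L \<epsilon> i - th d L \<epsilon> (i - 1)\<bar> \<le> (if L dvd (i - 1) then 2 * d else 0)" if i: "i \<in> {2..n}" for i
  proof (cases "L dvd (i - 1)")
    case True then show ?thesis using d by (auto simp: th_def)
  next
    case False
    have "i - 1 = Suc (i - 2)" using i by auto
    then have "(i - 1) div L = (i - 2) div L"
      using False by (simp add: div_Suc dvd_eq_mod_eq_0)
    moreover have "i - 1 - 1 = i - 2" by simp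
    ultimately have "blk L i = blk L (i - 1)" unfolding blk_def by simp
    then show ?thesis using False by (simp add: th_def)
  qed
  have "(\<Sum>i=2..n. \<bar>th d L \<epsilon> i - th d L \<epsilon> (i - 1)\<bar>) \<le> (\<Sum>i=2..n. (if L dvd (i - 1) then 2 * d else 0))"
    by (intro sum_mono step)
  also have "\<dots> = (\<Sum>i\<in>{i\<in>{2..n}. L dvd (i - 1)}. 2 * d)"
    by (rule sum.inter_filter[symmetric]) simp
  also have "\<dots> = 2 * d * real (card {i\<in>{2..n}. L dvd (i - 1)})"
    by simp
  also have "\<dots> \<le> 2 * d * real ((n - 1) div L)"
  proof -
    have "card {i\<in>{2..n}. L dvd (i - 1)} \<le> card {1..(n - 1) div L}"
    proof (rule card_inj_on_le[where f="\<lambda>i. (i - 1) div L"])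
      show "inj_on (\<lambda>i. (i - 1) div L) {i \<in> {2..n}. L dvd (i - 1)}"
      proof (rule inj_onI)
        fix i j assume ii: "i \<in> {i \<in> {2..n}. L dvd (i - 1)}" and jj: "j \<in> {i \<in> {2..n}. L dvd (i - 1)}"
          and eq: "(i - 1) div L = (j - 1) div L"
        from ii obtain a where a: "i - 1 = L * a" by (auto elim!: dvdE)
        from jj obtain b where b: "j - 1 = L * b" by (auto elim!: dvdE)
        have "a = b" using eq L unfolding a b by simp
        then have "i - 1 = j - 1" using a b by simp
        then show "i = j" using ii jj by auto
      qed
      show "(\<lambda>i. (i - 1) div L) ` {i \<in> {2..n}. L dvd (i - 1)} \<subseteq> {1..(n - 1) div L}"
      proof
        fix k assume "k \<in> (\<lambda>i. (i - 1) div L) ` {i \<in> {2..n}. L dvd (i - 1)}"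
        then obtain i where i: "i \<in> {2..n}" "L dvd (i - 1)" "k = (i - 1) div L" by auto
        have "i - 1 \<ge> L" using i by (intro dvd_imp_le) auto
        then have "L div L \<le> k" unfolding i(3) by (rule div_le_mono)
        then have "k \<ge> 1" using L by simp
        moreover have "k \<le> (n - 1) div L" unfolding i(3) using i(1) by (intro div_le_mono) auto
        ultimately show "k \<in> {1..(n - 1) div L}" by simp
      qed
    qed simp
    then show ?thesis using d by (simp add: mult_left_mono)
  qed
  finally show ?thesis .
qed

lemma same_block_card:
  assumes L: "L \<ge> 1" and t: "t \<ge> 1"
  shows "card {i\<in>{1..<t}. blk L i = blk L t} \<le> L"
proof -
  define q where "q = blk L t"
  have "{i\<in>{1..<t}. blk L i = blk L t} \<subseteq> {q * L + 1..<t}"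
  proof
    fix i assume i: "i \<in> {i\<in>{1..<t}. blk L i = blk L t}"
    then have "(i - 1) div L = q" unfolding q_def blk_def by simp
    then have "q * L \<le> i - 1" by (metis div_times_less_eq_dividend)
    then show "i \<in> {q * L + 1..<t}" using i by auto
  qed
  then have "card {i\<in>{1..<t}. blk L i = blk L t} \<le> card {q * L + 1..<t}"
    by (intro card_mono) auto
  also have "\<dots> = t - (q * L + 1)" by simp
  also have "\<dots> = (t - 1) - (t - 1) div L * L"
    unfolding q_def blk_def by simp
  also have "\<dots> = (t - 1) mod L"
    by (rule minus_div_mult_eq_mod)
  also have "\<dots> \<le> L" using L by (simp add: less_imp_le)
  finally show ?thesis .
qed

lemma pair_block:
  assumes s: "\<sigma> > 0" and xm: "x t \<in> borel_measurable (PiM {1..<t} (\<lambda>_. borel))" and t: "t \<ge> 1"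
    and L: "L \<ge> 1" and d: "d > 0" and dL: "d\<^sup>2 * real L \<le> \<sigma>\<^sup>2"
  shows "ennreal (d\<^sup>2 / 4) \<le> Rt \<sigma> x (th d L \<epsilon>) t + Rt \<sigma> x (th d L (flipb (blk L t) \<epsilon>)) t"
proof -
  define \<theta> where "\<theta> = th d L \<epsilon>"
  define \<theta>' where "\<theta>' = th d L (flipb (blk L t) \<epsilon>)"
  define J where "J = {1..<t}"
  define S where "S = {i\<in>J. blk L i = blk L t}"
  have dt: "(\<theta> t - \<theta>' t)\<^sup>2 = 4 * d\<^sup>2"
    unfolding \<theta>_def \<theta>'_def th_def flipb_def by (auto simp: power2_eq_square)
  have di: "(\<theta> i - \<theta>' i)\<^sup>2 = (if blk L i = blk L t then 4 * d\<^sup>2 else 0)" for i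
    unfolding \<theta>_def \<theta>'_def th_def flipb_def by (auto simp: power2_eq_square)
  have sumsq: "(\<Sum>i\<in>J. (\<theta> i - \<theta>' i)\<^sup>2) = 4 * d\<^sup>2 * real (card S)"
  proof -
    have "(\<Sum>i\<in>J. (\<theta> i - \<theta>' i)\<^sup>2) = (\<Sum>i\<in>J. if blk L i = blk L t then 4 * d\<^sup>2 else 0)"
      by (simp add: di)
    also have "\<dots> = (\<Sum>i\<in>S. 4 * d\<^sup>2)" unfolding S_def J_def by (rule sum.inter_filter[symmetric]) simp
    finally show ?thesis by simp
  qed
  have cardS: "real (card S) \<le> real L" unfolding S_def J_def using same_block_card[OF L t] by simp
  define A where "A = (\<Prod>i\<in>J. exp (-(\<theta> i - \<theta>' i)\<^sup>2/(8*\<sigma>\<^sup>2)))"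
  have "A = exp (\<Sum>i\<in>J. -(\<theta> i - \<theta>' i)\<^sup>2/(8*\<sigma>\<^sup>2))" unfolding A_def J_def by (simp add: exp_sum)
  also have "(\<Sum>i\<in>J. -(\<theta> i - \<theta>' i)\<^sup>2/(8*\<sigma>\<^sup>2)) = - (4 * d\<^sup>2 * real (card S)) / (8*\<sigma>\<^sup>2)"
    unfolding sumsq[symmetric] by (simp add: sum_divide_distrib sum_negf)
  finally have Aeq: "A = exp (- (4 * d\<^sup>2 * real (card S)) / (8*\<sigma>\<^sup>2))" .
  have "4 * d\<^sup>2 * real (card S) \<le> 4 * \<sigma>\<^sup>2"
  proof -
    have "4 * d\<^sup>2 * real (card S) \<le> 4 * d\<^sup>2 * real L" using cardS by (intro mult_left_mono) auto
    then show ?thesis using dL by linarith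
  qed
  then have "- (4 * d\<^sup>2 * real (card S)) / (8*\<sigma>\<^sup>2) \<ge> -1/2"
    using s by (simp add: field_simps)
  then have Age: "A \<ge> exp (-1/2)" unfolding Aeq by simp
  have "A\<^sup>2 \<ge> (exp (-1/2))\<^sup>2" using Age by (intro power_mono) auto
  also have "(exp (-1/2::real))\<^sup>2 = exp (-1)" by (simp add: power2_eq_square exp_add[symmetric])
  finally have A2: "A\<^sup>2 \<ge> exp (-1)" .
  have "exp (-1::real) = 1 / exp 1" by (simp add: exp_minus field_simps)
  moreover have "1 / exp 1 \<ge> (1/3::real)" using exp_le by (simp add: field_simps)
  ultimately have "A\<^sup>2 \<ge> 1/3" using A2 by linarith
  then have "d\<^sup>2 / 4 \<le> (\<theta> t - \<theta>' t)\<^sup>2 * 3 / 16 * A\<^sup>2"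
  proof -
    have "d\<^sup>2 * (3/4) * (1/3) \<le> d\<^sup>2 * (3/4) * A\<^sup>2" using \<open>A\<^sup>2 \<ge> 1/3\<close> by (intro mult_left_mono) auto
    then show ?thesis unfolding dt by simp
  qed
  then have "ennreal (d\<^sup>2 / 4) \<le> ennreal ((\<theta> t - \<theta>' t)\<^sup>2 * 3 / 16 * A\<^sup>2)" by (rule ennreal_leI)
  also have "\<dots> \<le> Rt \<sigma> x \<theta> t + Rt \<sigma> x \<theta>' t"
    unfolding A_def J_def by (rule pair_bound[where x=x and t=t, OF s xm])
  finally show ?thesis unfolding \<theta>_def \<theta>'_def .
qed

lemma block_sup:
  assumes s: "\<sigma> > 0" and fc: "forecaster n x" and L: "L \<ge> 1" and d: "d > 0"
    and dL: "d\<^sup>2 * real L \<le> \<sigma>\<^sup>2" and TVok: "2 * d * real ((n - 1) div L) \<le> C" and dU: "d \<le> U"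
  shows "ennreal (real n * d\<^sup>2 / 8) \<le> (SUP \<theta>\<in>{\<theta>. \<theta> \<in> TV_class n C \<and> \<bar>\<theta> 1\<bar> \<le> U}. risk n \<sigma> x \<theta>)"
proof -
  define E where "E = Pi\<^sub>E {..<n} (\<lambda>_. UNIV :: bool set)"
  have Efin: "finite E" unfolding E_def by (intro finite_PiE) auto
  have Ene: "E \<noteq> {}" unfolding E_def by (simp add: PiE_eq_empty_iff)
  have xm: "x t \<in> borel_measurable (PiM {1..<t} (\<lambda>_. borel))" if "t \<in> {1..n}" for t
    using fc that unfolding forecaster_def by auto
  have mem: "th d L \<epsilon> \<in> {\<theta>. \<theta> \<in> TV_class n C \<and> \<bar>\<theta> 1\<bar> \<le> U}" for \<epsilon>
    using th_TV[OF L, where d=d and n=n and \<epsilon>=\<epsilon>] TVok d dU unfolding TV_class_def by (auto simp: th_def)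
  have per_t: "of_nat (card E) * ennreal (d\<^sup>2 / 4 / 2) \<le> (\<Sum>\<epsilon>\<in>E. Rt \<sigma> x (th d L \<epsilon>) t)" if t: "t \<in> {1..n}" for t
  proof (rule flip_sum[OF Efin, where h="flipb (blk L t)"])
    have b: "blk L t \<in> {..<n}" using t L unfolding blk_def
      by (metis atLeastAtMost_iff diff_less div_le_dividend le_less_trans lessThan_iff less_one not_le zero_less_one less_le_trans)
    show "flipb (blk L t) e \<in> E" if "e \<in> E" for e
      using that b unfolding E_def flipb_def by (auto simp: PiE_iff extensional_def)
    show "flipb (blk L t) (flipb (blk L t) e) = e" for e
      unfolding flipb_def by auto
    show "ennreal (d\<^sup>2 / 4) \<le> Rt \<sigma> x (th d L e) t + Rt \<sigma> x (th d L (flipb (blk L t) e)) t" for e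
      using t by (intro pair_block[where x=x and t=t, OF s xm[OF t] _ L d dL]) auto
  qed simp
  have "of_nat (card E) * ennreal (real n * d\<^sup>2 / 8) = (\<Sum>t=1..n. of_nat (card E) * ennreal (d\<^sup>2 / 4 / 2))"
  proof -
    have "ennreal (real n * d\<^sup>2 / 8) = of_nat n * ennreal (d\<^sup>2 / 4 / 2)"
      by (simp add: ennreal_mult[symmetric] ennreal_of_nat_eq_real_of_nat)
    then show ?thesis by (simp add: mult_ac)
  qed
  also have "\<dots> \<le> (\<Sum>t=1..n. \<Sum>\<epsilon>\<in>E. Rt \<sigma> x (th d L \<epsilon>) t)"
    by (intro sum_mono per_t)
  also have "\<dots> = (\<Sum>\<epsilon>\<in>E. risk n \<sigma> x (th d L \<epsilon>))"
    by (subst sum.swap) (simp add: risk_eq[OF s fc])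
  finally show ?thesis
    by (intro avg_sup[OF Efin Ene mem])
qed



lemma aT_eq:
  fixes \<sigma> C n :: real
  assumes s: "\<sigma> > 0" and C: "C > 0" and n: "n > 0"
  shows "(2*\<sigma>*n/C) powr (2/3) * (n powr (1/3) * C powr (2/3) * \<sigma> powr (4/3)) = 2 powr (2/3) * n * \<sigma>\<^sup>2"
proof -
  have "(2*\<sigma>*n/C) powr (2/3) * C powr (2/3) = (2*\<sigma>*n/C * C) powr (2/3)"
    using s C n by (subst powr_mult) auto
  also have "2*\<sigma>*n/C * C = 2*\<sigma>*n" using C by simp
  also have "(2*\<sigma>*n) powr (2/3) = 2 powr (2/3) * \<sigma> powr (2/3) * n powr (2/3)"
    using s n by (simp add: powr_mult)
  finally have e1: "(2*\<sigma>*n/C) powr (2/3) * C powr (2/3) = 2 powr (2/3) * \<sigma> powr (2/3) * n powr (2/3)" .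
  have e2: "\<sigma> powr (2/3) * \<sigma> powr (4/3) = \<sigma>\<^sup>2"
    using s by (simp add: powr_add[symmetric] powr_numeral)
  have e3: "n powr (2/3) * n powr (1/3) = n"
    using n by (simp add: powr_add[symmetric])
  have "(2*\<sigma>*n/C) powr (2/3) * (n powr (1/3) * C powr (2/3) * \<sigma> powr (4/3))
      = ((2*\<sigma>*n/C) powr (2/3) * C powr (2/3)) * n powr (1/3) * \<sigma> powr (4/3)" by (simp add: mult_ac)
  also have "\<dots> = 2 powr (2/3) * (\<sigma> powr (2/3) * \<sigma> powr (4/3)) * (n powr (2/3) * n powr (1/3))"
    unfolding e1 by (simp add: mult_ac)
  also have "\<dots> = 2 powr (2/3) * n * \<sigma>\<^sup>2" unfolding e2 e3 by (simp add: mult_ac)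
  finally show ?thesis .
qed

lemma L32:
  fixes K L :: real
  assumes K: "K > 0" and L: "L \<ge> K powr (2/3)"
  shows "L * sqrt L \<ge> K"
proof -
  have Lpos: "L > 0" using L K by (smt (verit) powr_gt_zero)
  have "K = (K powr (2/3)) powr (3/2)" using K by (simp add: powr_powr)
  also have "\<dots> \<le> L powr (3/2)" using L K by (intro powr_mono2) auto
  also have "L powr (3/2) = L powr (1 + 1/2)" by simp
  also have "\<dots> = L powr 1 * L powr (1/2)" by (rule powr_add)
  also have "\<dots> = L * sqrt L" using Lpos by (simp add: powr_half_sqrt)
  finally show ?thesis .
qed

lemma logbound:
  fixes \<sigma> C :: real and n :: nat
  assumes s: "\<sigma> > 0" and sC: "\<sigma> \<le> C" and n: "n \<ge> 1"
  shows "\<sigma>\<^sup>2 * ln (real n) \<le> 3 * (real n powr (1/3) * C powr (2/3) * \<sigma> powr (4/3))"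
proof -
  have np: "real n > 0" using n by simp
  have "ln (real n) = 3 * ln (real n powr (1/3))" using np by (simp add: ln_powr)
  also have "ln (real n powr (1/3)) \<le> real n powr (1/3)"
    using np ln_le_minus_one[of "real n powr (1/3)"] by simp
  finally have l: "ln (real n) \<le> 3 * real n powr (1/3)" by simp
  have lnn: "ln (real n) \<ge> 0" using n by simp
  have "\<sigma>\<^sup>2 = \<sigma> powr (2/3) * \<sigma> powr (4/3)" using s by (simp add: powr_add[symmetric] powr_numeral)
  also have "\<dots> \<le> C powr (2/3) * \<sigma> powr (4/3)" using s sC by (intro mult_right_mono powr_mono2) auto
  finally have s2: "\<sigma>\<^sup>2 \<le> C powr (2/3) * \<sigma> powr (4/3)" .
  have "\<sigma>\<^sup>2 * ln (real n) \<le> (C powr (2/3) * \<sigma> powr (4/3)) * (3 * real n powr (1/3))"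
    using s2 l lnn by (intro mult_mono) auto
  then show ?thesis by (simp add: mult_ac)
qed

lemma smallbound:
  fixes \<sigma> C :: real and n :: nat
  assumes s: "\<sigma> > 0" and C: "2 * \<sigma> * real n \<le> C" and n: "n \<ge> 1"
  shows "real n powr (1/3) * C powr (2/3) * \<sigma> powr (4/3) \<le> C\<^sup>2"
proof -
  have np: "real n \<ge> 1" using n by simp
  have Cp: "C > 0" using C s np by (smt (verit) mult_pos_pos)
  have "real n powr (1/3) \<le> real n powr (4/3)" using np by (intro powr_mono) auto
  then have "real n powr (1/3) * \<sigma> powr (4/3) \<le> real n powr (4/3) * \<sigma> powr (4/3)"
    by (intro mult_right_mono) auto
  also have "\<dots> = (real n * \<sigma>) powr (4/3)" using s np by (simp add: powr_mult)
  also have "\<dots> \<le> C powr (4/3)"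
  proof (intro powr_mono2)
    have "0 \<le> \<sigma> * real n" using s np by simp
    moreover have "2 * \<sigma> * real n = 2 * (\<sigma> * real n)" by simp
    ultimately show "real n * \<sigma> \<le> C" using C by (simp only: mult.commute[of "real n"])
  qed (use s np in auto)
  finally have h: "real n powr (1/3) * \<sigma> powr (4/3) \<le> C powr (4/3)" .
  have "real n powr (1/3) * C powr (2/3) * \<sigma> powr (4/3) = (real n powr (1/3) * \<sigma> powr (4/3)) * C powr (2/3)"
    by (simp add: mult_ac)
  also have "\<dots> \<le> C powr (4/3) * C powr (2/3)" using h by (intro mult_right_mono) auto
  also have "\<dots> = C\<^sup>2" using Cp by (simp add: powr_add[symmetric] powr_numeral)
  finally show ?thesis .
qed



lemma two_point:
  assumes s: "\<sigma> > 0" and fc: "forecaster n x" and t: "t \<in> {1..n}"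
    and th: "\<theta> \<in> \<Theta>" and th': "\<theta>' \<in> \<Theta>" and agree: "\<And>i. i \<in> {1..<t} \<Longrightarrow> \<theta> i = \<theta>' i"
  shows "ennreal ((\<theta> t - \<theta>' t)\<^sup>2 * 3 / 32) \<le> (SUP \<theta>\<in>\<Theta>. risk n \<sigma> x \<theta>)"
proof -
  have xm: "x t \<in> borel_measurable (PiM {1..<t} (\<lambda>_. borel))"
    using fc t unfolding forecaster_def by auto
  have p1: "(\<Prod>i\<in>{1..<t}. exp (-(\<theta> i - \<theta>' i)\<^sup>2/(8*\<sigma>\<^sup>2))) = 1"
    by (intro prod.neutral) (simp add: agree)
  have pb: "ennreal ((\<theta> t - \<theta>' t)\<^sup>2 * 3 / 16) \<le> Rt \<sigma> x \<theta> t + Rt \<sigma> x \<theta>' t"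
    using pair_bound[where x=x and t=t and \<theta>=\<theta> and \<theta>'=\<theta>', OF s xm] unfolding p1 by simp
  have Rle: "Rt \<sigma> x \<psi> t \<le> risk n \<sigma> x \<psi>" for \<psi>
    unfolding risk_eq[OF s fc] using t by (intro member_le_sum) auto
  have "ennreal ((\<theta> t - \<theta>' t)\<^sup>2 * 3 / 16) \<le> (\<Sum>b\<in>(UNIV::bool set). risk n \<sigma> x (if b then \<theta> else \<theta>'))"
    using pb Rle[of \<theta>] Rle[of \<theta>'] by (simp add: UNIV_bool add.commute) (meson add_mono order_trans)
  moreover have "ennreal ((\<theta> t - \<theta>' t)\<^sup>2 * 3 / 16) = of_nat (card (UNIV::bool set)) * ennreal ((\<theta> t - \<theta>' t)\<^sup>2 * 3 / 32)"
  proof -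
    have "of_nat (card (UNIV::bool set)) * ennreal ((\<theta> t - \<theta>' t)\<^sup>2 * 3 / 32) = ennreal 2 * ennreal ((\<theta> t - \<theta>' t)\<^sup>2 * 3 / 32)"
      by simp
    also have "\<dots> = ennreal (2 * ((\<theta> t - \<theta>' t)\<^sup>2 * 3 / 32))" by (rule ennreal_mult[symmetric]) auto
    finally show ?thesis by simp
  qed
  ultimately show ?thesis
    by (intro avg_sup[where E="UNIV::bool set" and g="\<lambda>b. if b then \<theta> else \<theta>'"]) (auto simp: th th')
qed

lemma sup_bounds:
  fixes n :: nat and \<sigma> U C :: real
  assumes n: "n > 3" and s: "\<sigma> > 0" and U: "U > 0" and C: "C > 0" and mUC: "min U C > 2 * pi * \<sigma>"
    and fc: "forecaster n x"
  defines "\<Theta> \<equiv> {\<theta>. \<theta> \<in> TV_class n C \<and> \<bar>\<theta> 1\<bar> \<le> U}"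
  defines "T \<equiv> real n powr (1/3) * C powr (2/3) * \<sigma> powr (4/3)"
  shows "ennreal (3 * U\<^sup>2 / 8) \<le> (SUP \<theta>\<in>\<Theta>. risk n \<sigma> x \<theta>)"
    and "ennreal (3 * C\<^sup>2 / 8) \<le> (SUP \<theta>\<in>\<Theta>. risk n \<sigma> x \<theta>)"
    and "ennreal (T / 32) \<le> (SUP \<theta>\<in>\<Theta>. risk n \<sigma> x \<theta>)"
proof -
  have pi1: "pi > 1" using pi_gt3 by simp
  have sU: "\<sigma> < U" and sC: "\<sigma> < C"
  proof -
    have "\<sigma> < 2 * pi * \<sigma>" using pi1 s by simp
    then show "\<sigma> < U" "\<sigma> < C" using mUC by auto
  qed
  show hU: "ennreal (3 * U\<^sup>2 / 8) \<le> (SUP \<theta>\<in>\<Theta>. risk n \<sigma> x \<theta>)"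
  proof -
    have m1: "(\<lambda>_. U) \<in> \<Theta>" "(\<lambda>_. -U) \<in> \<Theta>" unfolding \<Theta>_def TV_class_def using C U by auto
    have "ennreal (((\<lambda>_. U) 1 - (\<lambda>_. -U) (1::nat))\<^sup>2 * 3 / 32) \<le> (SUP \<theta>\<in>\<Theta>. risk n \<sigma> x \<theta>)"
      by (rule two_point[OF s fc _ m1]) (use n in auto)
    moreover have "((\<lambda>_. U) 1 - (\<lambda>_. -U) (1::nat))\<^sup>2 * 3 / 32 = 3 * U\<^sup>2 / 8"
      by (simp add: power2_eq_square)
    ultimately show ?thesis by simp
  qed
  show hC: "ennreal (3 * C\<^sup>2 / 8) \<le> (SUP \<theta>\<in>\<Theta>. risk n \<sigma> x \<theta>)"
  proof -
    define f where "f c = (\<lambda>i::nat. if 2 \<le> i then c else 0)" for c :: real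
    have tv: "(\<Sum>i=2..n. \<bar>f c i - f c (i - 1)\<bar>) = \<bar>c\<bar>" for c
    proof -
      have "(\<Sum>i=2..n. \<bar>f c i - f c (i - 1)\<bar>) = (\<Sum>i\<in>{2..n}. if i = 2 then \<bar>c\<bar> else 0)"
        by (intro sum.cong refl) (auto simp: f_def)
      also have "\<dots> = \<bar>c\<bar>" using n by (simp add: sum.delta)
      finally show ?thesis .
    qed
    have f1: "f c 1 = 0" for c by (simp add: f_def)
    have m1: "f C \<in> \<Theta>" "f (-C) \<in> \<Theta>" unfolding \<Theta>_def TV_class_def mem_Collect_eq tv f1
      using C U by auto
    have "ennreal ((f C 2 - f (-C) 2)\<^sup>2 * 3 / 32) \<le> (SUP \<theta>\<in>\<Theta>. risk n \<sigma> x \<theta>)"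
      by (rule two_point[OF s fc _ m1]) (use n in \<open>auto simp: f_def\<close>)
    moreover have "(f C 2 - f (-C) 2)\<^sup>2 * 3 / 32 = 3 * C\<^sup>2 / 8"
      by (simp add: f_def power2_eq_square)
    ultimately show ?thesis by simp
  qed
  show "ennreal (T / 32) \<le> (SUP \<theta>\<in>\<Theta>. risk n \<sigma> x \<theta>)"
  proof (cases "2 * \<sigma> * real n \<le> C")
    case True
    have "T \<le> C\<^sup>2" unfolding T_def using smallbound[OF s True] n by simp
    moreover have "0 \<le> C\<^sup>2" by simp
    ultimately have "T / 32 \<le> 3 * C\<^sup>2 / 8" by linarith
    then have "ennreal (T / 32) \<le> ennreal (3 * C\<^sup>2 / 8)" by (rule ennreal_leI)
    then show ?thesis using hC by (rule order_trans)
  next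
    case False
    define K where "K = 2 * \<sigma> * real n / C"
    have K1: "K > 1" unfolding K_def using False C by simp
    define a where "a = K powr (2/3)"
    have a1: "a > 1" unfolding a_def using K1 by (intro gr_one_powr) auto
    define L where "L = nat \<lceil>a\<rceil>"
    have La: "real L \<ge> a" unfolding L_def using a1 by linarith
    have La2: "real L \<le> 2 * a" unfolding L_def using a1 by linarith
    have L1: "L \<ge> 1" using La a1 by linarith
    have Lp: "real L > 0" using L1 by simp
    define d where "d = \<sigma> / sqrt (real L)"
    have dp: "d > 0" unfolding d_def using s Lp by simp
    have dL: "d\<^sup>2 * real L = \<sigma>\<^sup>2" unfolding d_def using Lp by (simp add: power_divide)
    have sqL: "sqrt (real L) \<ge> 1" using L1 by simp
    have dU: "d \<le> U"
    proof -
      have "d \<le> \<sigma>" unfolding d_def using s sqL by (simp add: divide_le_eq)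
      then show ?thesis using sU by simp
    qed
    have TVok: "2 * d * real ((n - 1) div L) \<le> C"
    proof -
      have "real ((n - 1) div L) \<le> real (n - 1) / real L" by (rule of_nat_div_le_of_nat)
      also have "\<dots> \<le> real n / real L" using Lp by (intro divide_right_mono) auto
      finally have q: "real ((n - 1) div L) \<le> real n / real L" .
      have "2 * d * real ((n - 1) div L) \<le> 2 * d * (real n / real L)"
        using q dp by (intro mult_left_mono) auto
      also have "\<dots> = K * C / (real L * sqrt (real L))"
        unfolding d_def K_def using C by (simp add: field_simps)
      also have "\<dots> \<le> C"
      proof -
        have "K \<le> real L * sqrt (real L)" using L32[of K "real L"] K1 La unfolding a_def by simp
        then have "K * C \<le> real L * sqrt (real L) * C" using C by (intro mult_right_mono) auto
        then show ?thesis using Lp by (simp add: divide_le_eq mult.commute)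
      qed
      finally show ?thesis .
    qed
    have "ennreal (real n * d\<^sup>2 / 8) \<le> (SUP \<theta>\<in>\<Theta>. risk n \<sigma> x \<theta>)"
      unfolding \<Theta>_def by (rule block_sup[OF s fc L1 dp _ TVok dU]) (simp add: dL)
    moreover have "T / 32 \<le> real n * d\<^sup>2 / 8"
    proof -
      have np: "real n > 0" using n by simp
      have aT: "a * T = 2 powr (2/3) * real n * \<sigma>\<^sup>2"
        unfolding a_def K_def T_def by (rule aT_eq[OF s C np])
      have "2 powr (2/3) \<le> (2::real) powr 1" by (intro powr_mono) auto
      then have "a * T \<le> 2 * real n * \<sigma>\<^sup>2" unfolding aT using np by (intro mult_right_mono) auto
      then have "T \<le> 2 * real n * \<sigma>\<^sup>2 / a" using a1 by (simp add: field_simps)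
      also have "\<dots> \<le> 2 * real n * \<sigma>\<^sup>2 / (real L / 2)"
        using La2 a1 Lp np s by (intro divide_left_mono) auto
      also have "\<dots> = 32 * (real n * d\<^sup>2 / 8)"
        unfolding d_def using Lp by (simp add: power_divide field_simps)
      finally show ?thesis by simp
    qed
    ultimately show ?thesis by (meson ennreal_leI order_trans)
  qed
qed

theorem proposition2:
  "\<exists>c::real. c > 0 \<and>
    (\<forall>(n::nat) (\<sigma>::real) (U::real) (C::real).
      n > 3 \<longrightarrow> \<sigma> > 0 \<longrightarrow> U > 0 \<longrightarrow> C > 0 \<longrightarrow> min U C > 2 * pi * \<sigma> \<longrightarrow>
      (INF x\<in>{x. forecaster n x}. SUP \<theta>\<in>{\<theta>. \<theta> \<in> TV_class n C \<and> \<bar>\<theta> 1\<bar> \<le> U}. risk n \<sigma> x \<theta>)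
        \<ge> ennreal (c * (U\<^sup>2 + C\<^sup>2 + \<sigma>\<^sup>2 * ln (real n)
              + real n powr (1/3) * C powr (2/3) * \<sigma> powr (4/3))))"
proof (intro exI[of _ "1/134"] conjI allI impI)
  show "(0::real) < 1/134" by simp
  fix n :: nat and \<sigma> U C :: real
  assume n: "n > 3" and s: "\<sigma> > 0" and U: "U > 0" and C: "C > 0" and mUC: "min U C > 2 * pi * \<sigma>"
  define T where "T = real n powr (1/3) * C powr (2/3) * \<sigma> powr (4/3)"
  define m where "m = max (3 * U\<^sup>2 / 8) (max (3 * C\<^sup>2 / 8) (T / 32))"
  have sC: "\<sigma> \<le> C"
  proof -
    have "\<sigma> < 2 * pi * \<sigma>" using pi_gt3 s by simp
    then show ?thesis using mUC by auto
  qed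
  have lg: "\<sigma>\<^sup>2 * ln (real n) \<le> 3 * T" unfolding T_def by (rule logbound[OF s sC]) (use n in simp)
  have "U\<^sup>2 + C\<^sup>2 + \<sigma>\<^sup>2 * ln (real n) + T \<le> 134 * m"
  proof -
    have "U\<^sup>2 \<le> 8/3 * m" "C\<^sup>2 \<le> 8/3 * m" "T \<le> 32 * m" "0 \<le> m" unfolding m_def by (auto simp: le_max_iff_disj)
    then show ?thesis using lg by linarith
  qed
  then have cm: "1/134 * (U\<^sup>2 + C\<^sup>2 + \<sigma>\<^sup>2 * ln (real n) + T) \<le> m" by simp
  show "ennreal (1/134 * (U\<^sup>2 + C\<^sup>2 + \<sigma>\<^sup>2 * ln (real n) + real n powr (1/3) * C powr (2/3) * \<sigma> powr (4/3)))
      \<le> (INF x\<in>{x. forecaster n x}. SUP \<theta>\<in>{\<theta>. \<theta> \<in> TV_class n C \<and> \<bar>\<theta> 1\<bar> \<le> U}. risk n \<sigma> x \<theta>)"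
  proof (rule INF_greatest)
    fix x assume "x \<in> {x. forecaster n x}"
    then have fc: "forecaster n x" by simp
    note b = sup_bounds[OF n s U C mUC fc]
    have "ennreal m \<le> (SUP \<theta>\<in>{\<theta>. \<theta> \<in> TV_class n C \<and> \<bar>\<theta> 1\<bar> \<le> U}. risk n \<sigma> x \<theta>)"
      unfolding m_def T_def using b by (auto simp: max_def)
    moreover have "ennreal (1/134 * (U\<^sup>2 + C\<^sup>2 + \<sigma>\<^sup>2 * ln (real n) + real n powr (1/3) * C powr (2/3) * \<sigma> powr (4/3))) \<le> ennreal m"
      using cm unfolding T_def by (rule ennreal_leI)
    ultimately show "ennreal (1/134 * (U\<^sup>2 + C\<^sup>2 + \<sigma>\<^sup>2 * ln (real n) + real n powr (1/3) * C powr (2/3) * \<sigma> powr (4/3)))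
      \<le> (SUP \<theta>\<in>{\<theta>. \<theta> \<in> TV_class n C \<and> \<bar>\<theta> 1\<bar> \<le> U}. risk n \<sigma> x \<theta>)" by (rule order_trans[rotated])
  qed
qed

end
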